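(* Let $\boldsymbol X=A\times_{\max}\boldsymbol Z$ be a recursive max-linear model on a DAG $\mathcal D=(V,E)$ satisfying Assumptions A, fix any $a>1$, and let $O\subseteq V$ satisfy $\mathrm{An}(O)\cap(V\setminus O)=\emptyset$. Then $j\in V\setminus O$ satisfies $\mathrm{an}(j)\cap(V\setminus O)=\emptyset$ if and only if $$\sum_{\ell\in (V\setminus O)\setminus\{j\}}\big(a_{i\ell}^2\vee a^2a_{j\ell}^2-a_{i\ell}^2\vee a_{j\ell}^2\big)=(a^2-1)\sum_{\ell\in (V\setminus O)\setminus\{j\}}a_{j\ell}^2\quad\text{for all } i\in V\setminus(O\cup\{j\}).$$
   Context: Let $\mathcal D=(V,E)$ be a directed acyclic graph with $V=\{1,\dots,d\}$; $\mathrm{pa}(i)$, $\mathrm{an}(i)$ denote parents and ancestors (nodes with a directed path to $i$) of $i$, $\mathrm{An}(i)=\mathrm{an}(i)\cup\{i\}$, $\mathrm{An}(U)=\bigcup_{u\in U}\mathrm{An}(u)$; $\vee$ denotes maximum. A recursive max-linear model (RMLM) on $\mathcal D$ is the unique solution of $X_i=\bigvee_{k\in\mathrm{pa}(i)}c_{ik}X_k\vee c_{ii}Z_i$, $i\in V$, with edge weights $c_{ik}>0$ ($k\in \mathrm{pa}(i)$), $c_{ii}>0$; it equals $X_i=(A\times_{\max}\boldsymbol Z)_i=\bigvee_{j\in V}a_{ij}Z_j$ where $a_{ii}=c_{ii}$, $a_{ij}$ for $j\in\mathrm{an}(i)$ is the maximum over all directed paths $j=\ell_0\to\ell_1\to\dots\to\ell_m=i$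 of $c_{jj}c_{\ell_1\ell_0}\cdots c_{\ell_m\ell_{m-1}}$, and $a_{ij}=0$ for $j\notin\mathrm{An}(i)$. Assumptions A: (A1) $Z_1,\dots,Z_d$ are independent, nonnegative, atom-free, with $n\,\mathbb P(n^{-1/2}Z_i>z)\to z^{-2}$ as $n\to\infty$ for all $z>0$; (A2) the norm is the Euclidean norm; (A3) $A$ is standardised, i.e. each row is divided by its Euclidean norm so that $\sum_{j\in V}a_{ij}^2=1$ for all $i$ (the model is taken as $\boldsymbol X=A\times_{\max}\boldsymbol Z$ with this standardised $A$). Under these assumptions it is known that $a_{ij}>0$ iff $j\in\mathrm{An}(i)$, and $a_{jj}>a_{ij}$ for all $i\neq j$. *)

theory Defs
  imports Complex_Main
begin

text \<open>DAG on V = {1..d}; an edge (k, i) in E means k \<rightarrow> i (k is a parent of i).\<close>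

definition verts :: "nat \<Rightarrow> nat set" where
  "verts d = {1..d}"

definition ancestors :: "(nat \<times> nat) set \<Rightarrow> nat \<Rightarrow> nat set" where
  "ancestors E i = {k. (k, i) \<in> E\<^sup>+}"

definition Ancestors :: "(nat \<times> nat) set \<Rightarrow> nat set \<Rightarrow> nat set" where
  "Ancestors E U = (\<Union>u\<in>U. ancestors E u \<union> {u})"

definition dpath :: "(nat \<times> nat) set \<Rightarrow> nat list \<Rightarrow> bool" where
  "dpath E p \<longleftrightarrow> p \<noteq> [] \<and> (\<forall>t. Suc t < length p \<longrightarrow> (p ! t, p ! Suc t) \<in> E)"

definition paths_from_to :: "(nat \<times> nat) set \<Rightarrow> nat \<Rightarrow> nat \<Rightarrow> nat list set" where
  "paths_from_to E j i = {p. dpath E p \<and> hd p = j \<and> last p = i}"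

definition path_weight :: "(nat \<Rightarrow> nat \<Rightarrow> real) \<Rightarrow> nat list \<Rightarrow> real" where
  "path_weight c p = c (hd p) (hd p) * prod_list (map (\<lambda>(u, v). c v u) (zip p (tl p)))"

text \<open>Unstandardised max-linear coefficient a_ij (0 if j is not in An(i)).\<close>
definition ml_coef :: "(nat \<times> nat) set \<Rightarrow> (nat \<Rightarrow> nat \<Rightarrow> real) \<Rightarrow> nat \<Rightarrow> nat \<Rightarrow> real" where
  "ml_coef E c i j =
     (if paths_from_to E j i = {} then 0 else Max (path_weight c ` paths_from_to E j i))"

definition std_coef :: "nat \<Rightarrow> (nat \<times> nat) set \<Rightarrow> (nat \<Rightarrow> nat \<Rightarrow> real) \<Rightarrow> nat \<Rightarrow> nat \<Rightarrow> real" where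
  "std_coef d E c i j = ml_coef E c i j / sqrt (\<Sum>l\<in>verts d. (ml_coef E c i l)\<^sup>2)"

end

theory Submission imports Defs
begin

lemma dpath_trancl: "dpath E p \<Longrightarrow> s < t \<Longrightarrow> t < length p \<Longrightarrow> (p!s, p!t) \<in> E\<^sup>+"
proof (induction t)
  case 0 then show ?case by simp
next
  case (Suc t)
  have e: "(p!t, p!Suc t) \<in> E" using Suc.prems unfolding dpath_def by auto
  show ?case
  proof (cases "s = t")
    case True then show ?thesis using e by auto
  next
    case False then have "(p!s,p!t)\<in>E\<^sup>+" using Suc by auto
    then show ?thesis using e by (meson trancl_into_trancl)
  qed
qed

lemma dpath_distinct: assumes "acyclic E" "dpath E p" shows "distinct p"
  unfolding distinct_conv_nth
proof (intro allI impI)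
  fix s t assume h: "s < length p" "t < length p" "s \<noteq> t"
  show "p!s \<noteq> p!t"
  proof (cases "s < t")
    case True then show ?thesis using dpath_trancl[OF assms(2) True h(2)] assms(1)
      by (metis acyclic_def)
  next
    case False then have ts: "t < s" using h by auto
    show ?thesis using dpath_trancl[OF assms(2) ts h(1)] assms(1)
      by (metis acyclic_def)
  qed
qed

lemma dpath_zip: "dpath E p \<longleftrightarrow> p \<noteq> [] \<and> set (zip p (tl p)) \<subseteq> E"
proof
  assume "dpath E p" then show "p \<noteq> [] \<and> set (zip p (tl p)) \<subseteq> E"
    unfolding dpath_def by (auto simp: in_set_zip nth_tl)
next
  assume h: "p \<noteq> [] \<and> set (zip p (tl p)) \<subseteq> E"
  show "dpath E p" unfolding dpath_def
  proof (intro conjI allI impI)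
    show "p \<noteq> []" using h by auto
    fix t assume "Suc t < length p"
    then have "(p!t, p!Suc t) \<in> set (zip p (tl p))"
      by (auto simp: in_set_zip nth_tl intro!: exI[of _ t])
    then show "(p!t, p!Suc t) \<in> E" using h by auto
  qed
qed

lemma zip_app: "zip (xs @ x # ys) (tl (xs @ x # ys)) = zip (xs @ [x]) (tl (xs @ [x])) @ zip (x # ys) ys"
proof (induction xs)
  case Nil then show ?case by simp
next
  case (Cons y xs) then show ?case by (cases xs) auto
qed

lemma prod_list_pos_all: "\<forall>z\<in>set xs. (z::real) > 0 \<Longrightarrow> prod_list xs > 0"
  by (induction xs) auto

lemma concat_path:
  assumes q: "dpath E q" and p: "dpath E p" and eq: "last q = hd p"
  shows "dpath E (q @ tl p)" "hd (q @ tl p) = hd q" "last (q @ tl p) = last p"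
    "path_weight c (q @ tl p) * c (hd p) (hd p) = path_weight c q * path_weight c p"
proof -
  have qne: "q \<noteq> []" and pne: "p \<noteq> []" using p q unfolding dpath_def by auto
  define x where "x = hd p"
  obtain q' where qd: "q = q' @ [x]" using qne eq x_def by (metis append_butlast_last_id)
  obtain p' where pd: "p = x # p'" using pne x_def by (cases p) auto
  have z: "zip (q @ tl p) (tl (q @ tl p)) = zip q (tl q) @ zip p (tl p)"
    unfolding qd pd using zip_app[of q' x p'] by simp
  show "dpath E (q @ tl p)" using p q qne unfolding dpath_zip z by auto
  show "hd (q @ tl p) = hd q" using qne by simp
  show "last (q @ tl p) = last p" unfolding qd pd by simp
  show "path_weight c (q @ tl p) * c (hd p) (hd p) = path_weight c q * path_weight c p"
    unfolding path_weight_def z using qne x_def pd by (simp add: hd_append)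
qed

lemma pw_pos:
  assumes "dpath E p" "hd p \<in> verts d" "\<And>k i. (k,i)\<in>E \<Longrightarrow> c i k > 0"
    "\<And>i. i\<in>verts d \<Longrightarrow> c i i > 0"
  shows "path_weight c p > 0"
proof -
  have "\<forall>z\<in>set (map (\<lambda>(u, v). c v u) (zip p (tl p))). z > 0"
    using assms(1,3) unfolding dpath_zip by auto
  then have "prod_list (map (\<lambda>(u, v). c v u) (zip p (tl p))) > 0" by (rule prod_list_pos_all)
  then show ?thesis unfolding path_weight_def using assms(2,4) by simp
qed

lemma paths_finite:
  assumes E_sub: "E \<subseteq> verts d \<times> verts d" and ac: "acyclic E"
  shows "finite (paths_from_to E j i)"
proof -
  let ?A = "insert j (verts d)"
  have "paths_from_to E j i \<subseteq> {xs. set xs \<subseteq> ?A \<and> length xs \<le> card ?A}"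
  proof
    fix p assume "p \<in> paths_from_to E j i"
    then have dp: "dpath E p" and hp: "hd p = j" unfolding paths_from_to_def by auto
    have ne: "p \<noteq> []" using dp unfolding dpath_def by auto
    have sub: "set p \<subseteq> ?A"
    proof
      fix x assume "x \<in> set p"
      then obtain t where t: "t < length p" "p ! t = x" by (auto simp: in_set_conv_nth)
      show "x \<in> ?A"
      proof (cases t)
        case 0 then show ?thesis using t hp ne by (simp add: hd_conv_nth)
      next
        case (Suc t') then have "(p!t', p!t) \<in> E" using dp t unfolding dpath_def by auto
        then show ?thesis using E_sub t by auto
      qed
    qed
    have "length p = card (set p)" using dpath_distinct[OF ac dp] by (simp add: distinct_card)
    also have "\<dots> \<le> card ?A" using sub by (intro card_mono) (auto simp: verts_def)
    finally show "p \<in> {xs. set xs \<subseteq> ?A \<and> length xs \<le> card ?A}" using sub by simp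
  qed
  moreover have "finite {xs. set xs \<subseteq> ?A \<and> length xs \<le> card ?A}"
    by (rule finite_lists_length_le) (simp add: verts_def)
  ultimately show ?thesis by (rule finite_subset)
qed

lemma paths_self: assumes ac: "acyclic E" shows "paths_from_to E x x = {[x]}"
proof -
  have "p = [x]" if "p \<in> paths_from_to E x x" for p
  proof -
    have dp: "dpath E p" and h: "hd p = x" "last p = x" using that unfolding paths_from_to_def by auto
    have ne: "p \<noteq> []" using dp unfolding dpath_def by auto
    show ?thesis
    proof (rule ccontr)
      assume "p \<noteq> [x]"
      then have "length p \<ge> 2" using ne h by (cases p) (auto simp: Suc_le_eq)
      then have "(p!0, p!(length p - 1)) \<in> E\<^sup>+" using dpath_trancl[OF dp] by auto
      then have "(x,x) \<in> E\<^sup>+" using h ne by (simp add: hd_conv_nth last_conv_nth)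
      then show False using ac by (simp add: acyclic_def)
    qed
  qed
  moreover have "[x] \<in> paths_from_to E x x" unfolding paths_from_to_def dpath_def by auto
  ultimately show ?thesis by blast
qed

lemma paths_empty: assumes "k \<noteq> i" "(k,i) \<notin> E\<^sup>+" shows "paths_from_to E k i = {}"
proof (rule ccontr)
  assume "paths_from_to E k i \<noteq> {}"
  then obtain p where dp: "dpath E p" and h: "hd p = k" "last p = i" unfolding paths_from_to_def by auto
  have ne: "p \<noteq> []" using dp unfolding dpath_def by auto
  have "length p \<ge> 2" using ne h assms(1) by (cases p) (auto split: if_splits simp: Suc_le_eq)
  then have "(p!0, p!(length p - 1)) \<in> E\<^sup>+" using dpath_trancl[OF dp] by auto
  then show False using h ne assms(2) by (simp add: hd_conv_nth last_conv_nth)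
qed

lemma paths_nonempty: assumes "(k,i) \<in> E\<^sup>+" shows "paths_from_to E k i \<noteq> {}"
  using assms
proof (induction rule: trancl_induct)
  case (base y)
  then have "[k,y] \<in> paths_from_to E k y" unfolding paths_from_to_def dpath_def
    by (auto simp: less_Suc_eq)
  then show ?case by blast
next
  case (step y z)
  then obtain p where p: "p \<in> paths_from_to E k y" by blast
  have e: "dpath E [y,z]" using step(2) unfolding dpath_def by (auto simp: less_Suc_eq)
  have "p @ tl [y,z] \<in> paths_from_to E k z"
    using concat_path[OF _ e, of p] p unfolding paths_from_to_def by auto
  then show ?case by blast
qed

locale mlm =
  fixes d :: nat and E :: "(nat \<times> nat) set" and c :: "nat \<Rightarrow> nat \<Rightarrow> real"
  assumes E_sub: "E \<subseteq> verts d \<times> verts d"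
    and dag: "acyclic E"
    and edge_pos: "\<And>k i. (k, i) \<in> E \<Longrightarrow> c i k > 0"
    and diag_pos: "\<And>i. i \<in> verts d \<Longrightarrow> c i i > 0"
begin

lemma fin: "finite (paths_from_to E k i)" by (rule paths_finite[OF E_sub dag])

lemma ml_ge: "p \<in> paths_from_to E k i \<Longrightarrow> path_weight c p \<le> ml_coef E c i k"
  unfolding ml_coef_def using fin by (auto intro!: Max_ge)

lemma ml_attained: "paths_from_to E k i \<noteq> {} \<Longrightarrow> \<exists>p\<in>paths_from_to E k i. ml_coef E c i k = path_weight c p"
proof -
  assume ne: "paths_from_to E k i \<noteq> {}"
  have "Max (path_weight c ` paths_from_to E k i) \<in> path_weight c ` paths_from_to E k i"
    using fin ne by (intro Max_in) auto
  then show ?thesis unfolding ml_coef_def using ne by auto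
qed

lemma pw_pos': "p \<in> paths_from_to E k i \<Longrightarrow> k \<in> verts d \<Longrightarrow> path_weight c p > 0"
  using pw_pos[of E p d c] edge_pos diag_pos unfolding paths_from_to_def by auto

lemma ml_nonneg: "k \<in> verts d \<Longrightarrow> ml_coef E c i k \<ge> 0"
proof (cases "paths_from_to E k i = {}")
  case True then show ?thesis unfolding ml_coef_def by simp
next
  case False
  assume k: "k \<in> verts d"
  then obtain p where "p \<in> paths_from_to E k i" using False by blast
  then show ?thesis using ml_ge pw_pos' k by (meson less_le_trans less_eq_real_def)
qed

lemma ml_pos: "(k,i) \<in> E\<^sup>+ \<Longrightarrow> k \<in> verts d \<Longrightarrow> ml_coef E c i k > 0"
proof -
  assume h: "(k,i) \<in> E\<^sup>+" "k \<in> verts d"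
  then obtain p where "p \<in> paths_from_to E k i" using paths_nonempty by blast
  then show ?thesis using ml_ge pw_pos' h(2) by (meson less_le_trans)
qed

lemma ml_diag: "ml_coef E c i i = c i i"
  unfolding ml_coef_def paths_self[OF dag] by (simp add: path_weight_def)

lemma ml_zero: "k \<noteq> i \<Longrightarrow> (k,i) \<notin> E\<^sup>+ \<Longrightarrow> ml_coef E c i k = 0"
  unfolding ml_coef_def using paths_empty by simp

lemma S_pos: "i \<in> verts d \<Longrightarrow> (\<Sum>l\<in>verts d. (ml_coef E c i l)\<^sup>2) > 0"
proof -
  assume i: "i \<in> verts d"
  have "(ml_coef E c i i)\<^sup>2 \<le> (\<Sum>l\<in>verts d. (ml_coef E c i l)\<^sup>2)"
    by (rule member_le_sum) (use i in \<open>auto simp: verts_def\<close>)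
  moreover have "(ml_coef E c i i)\<^sup>2 > 0" using ml_diag diag_pos[OF i] by simp
  ultimately show ?thesis by linarith
qed

lemma compose:
  assumes l0: "(l0, j) \<in> E\<^sup>+" "l0 \<in> verts d" and k: "k \<in> verts d"
  shows "ml_coef E c j l0 * ml_coef E c l0 k \<le> ml_coef E c j k * c l0 l0"
proof (cases "paths_from_to E k l0 = {}")
  case True
  then show ?thesis using ml_nonneg[OF k, of j] diag_pos[OF l0(2)] unfolding ml_coef_def[of E c l0 k] by simp
next
  case False
  obtain q where q: "q \<in> paths_from_to E k l0" "ml_coef E c l0 k = path_weight c q"
    using ml_attained[OF False] by blast
  obtain p where p: "p \<in> paths_from_to E l0 j" "ml_coef E c j l0 = path_weight c p"
    using ml_attained paths_nonempty[OF l0(1)] by blast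
  have qd: "dpath E q" "hd q = k" "last q = l0" and pd: "dpath E p" "hd p = l0" "last p = j"
    using p q unfolding paths_from_to_def by auto
  have "q @ tl p \<in> paths_from_to E k j"
    using concat_path[OF qd(1) pd(1)] qd pd unfolding paths_from_to_def by auto
  then have "path_weight c (q @ tl p) \<le> ml_coef E c j k" by (rule ml_ge)
  moreover have "path_weight c (q @ tl p) * c l0 l0 = path_weight c q * path_weight c p"
    using concat_path(4)[OF qd(1) pd(1), of c] qd pd by simp
  ultimately show ?thesis using p q diag_pos[OF l0(2)]
    by (metis mult.commute mult_right_mono less_eq_real_def)
qed

end

theorem corollary4p3:
  fixes d :: nat and E :: "(nat \<times> nat) set" and c :: "nat \<Rightarrow> nat \<Rightarrow> real"
    and a :: real and Obs :: "nat set" and j :: nat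
  assumes E_sub: "E \<subseteq> verts d \<times> verts d"
    and dag: "acyclic E"
    and edge_pos: "\<And>k i. (k, i) \<in> E \<Longrightarrow> c i k > 0"
    and diag_pos: "\<And>i. i \<in> verts d \<Longrightarrow> c i i > 0"
    and a_gt: "a > 1"
    and O_sub: "Obs \<subseteq> verts d"
    and O_anc: "Ancestors E Obs \<inter> (verts d - Obs) = {}"
    and j_in: "j \<in> verts d - Obs"
  shows "ancestors E j \<inter> (verts d - Obs) = {} \<longleftrightarrow>
    (\<forall>i \<in> verts d - (Obs \<union> {j}).
       (\<Sum>l\<in>(verts d - Obs) - {j}.
          max ((std_coef d E c i l)\<^sup>2) (a\<^sup>2 * (std_coef d E c j l)\<^sup>2)
          - max ((std_coef d E c i l)\<^sup>2) ((std_coef d E c j l)\<^sup>2))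
       = (a\<^sup>2 - 1) * (\<Sum>l\<in>(verts d - Obs) - {j}. (std_coef d E c j l)\<^sup>2))"
proof -
  interpret mlm d E c using E_sub dag edge_pos diag_pos by unfold_locales auto
  let ?U = "verts d - Obs"
  let ?ml = "ml_coef E c"
  let ?S = "\<lambda>i. (\<Sum>l\<in>verts d. (?ml i l)\<^sup>2)"
  have a2: "a\<^sup>2 > 1" using a_gt by (metis one_less_power zero_less_numeral)
  have pt: "max x (a\<^sup>2*y) - max x y \<le> (a\<^sup>2-1)*y" if "y \<ge> 0" for x y :: real
  proof -
    have "a\<^sup>2*y \<ge> y" using mult_right_mono[of 1 "a\<^sup>2" y] a2 that by simp
    then show ?thesis by (auto simp: max_def algebra_simps)
  qed
  have pts: "max x (a\<^sup>2*y) - max x y < (a\<^sup>2-1)*y" if "y > 0" "x > y" for x y :: real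
  proof -
    have "a\<^sup>2*y > y" using mult_strict_right_mono[of 1 "a\<^sup>2" y] a2 that by simp
    then show ?thesis using that by (auto simp: max_def algebra_simps)
  qed
  have jv: "j \<in> verts d" using j_in by auto
  show ?thesis
  proof
    assume anc: "ancestors E j \<inter> ?U = {}"
    have z: "std_coef d E c j l = 0" if "l \<in> ?U - {j}" for l
    proof -
      have "(l, j) \<notin> E\<^sup>+" using anc that unfolding ancestors_def by auto
      then show ?thesis unfolding std_coef_def using ml_zero that by simp
    qed
    have s1: "(\<Sum>l\<in>?U - {j}. (std_coef d E c j l)\<^sup>2) = 0" by (rule sum.neutral) (simp add: z)
    show "\<forall>i \<in> verts d - (Obs \<union> {j}).
       (\<Sum>l\<in>?U - {j}.
          max ((std_coef d E c i l)\<^sup>2) (a\<^sup>2 * (std_coef d E c j l)\<^sup>2)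
          - max ((std_coef d E c i l)\<^sup>2) ((std_coef d E c j l)\<^sup>2))
       = (a\<^sup>2 - 1) * (\<Sum>l\<in>?U - {j}. (std_coef d E c j l)\<^sup>2)"
    proof
      fix i
      have "(\<Sum>l\<in>?U - {j}.
          max ((std_coef d E c i l)\<^sup>2) (a\<^sup>2 * (std_coef d E c j l)\<^sup>2)
          - max ((std_coef d E c i l)\<^sup>2) ((std_coef d E c j l)\<^sup>2)) = 0"
        by (rule sum.neutral) (simp add: z)
      then show "(\<Sum>l\<in>?U - {j}.
          max ((std_coef d E c i l)\<^sup>2) (a\<^sup>2 * (std_coef d E c j l)\<^sup>2)
          - max ((std_coef d E c i l)\<^sup>2) ((std_coef d E c j l)\<^sup>2))
       = (a\<^sup>2 - 1) * (\<Sum>l\<in>?U - {j}. (std_coef d E c j l)\<^sup>2)" using s1 by simp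
    qed
  next
    assume H: "\<forall>i \<in> verts d - (Obs \<union> {j}).
       (\<Sum>l\<in>?U - {j}.
          max ((std_coef d E c i l)\<^sup>2) (a\<^sup>2 * (std_coef d E c j l)\<^sup>2)
          - max ((std_coef d E c i l)\<^sup>2) ((std_coef d E c j l)\<^sup>2))
       = (a\<^sup>2 - 1) * (\<Sum>l\<in>?U - {j}. (std_coef d E c j l)\<^sup>2)"
    show "ancestors E j \<inter> ?U = {}"
    proof (rule ccontr)
      assume "ancestors E j \<inter> ?U \<noteq> {}"
      then obtain l0 where l0j: "(l0, j) \<in> E\<^sup>+" and l0U: "l0 \<in> ?U"
        unfolding ancestors_def by auto
      have l0v: "l0 \<in> verts d" using l0U by auto
      have l0ne: "l0 \<noteq> j" using l0j dag by (auto simp: acyclic_def)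
      have jl0: "(j, l0) \<notin> E\<^sup>+" using l0j dag by (meson acyclic_def trancl_trans)
      define c0 where "c0 = c l0 l0"
      have c0: "c0 > 0" using diag_pos[OF l0v] c0_def by simp
      define m where "m = ?ml j l0"
      have m: "m > 0" unfolding m_def by (rule ml_pos[OF l0j l0v])
      define r where "r = m / c0"
      have r: "r > 0" using m c0 r_def by simp
      have pw: "(r * ?ml l0 k)\<^sup>2 \<le> (?ml j k)\<^sup>2" if k: "k \<in> verts d" for k
      proof -
        have "m * ?ml l0 k \<le> ?ml j k * c0" using compose[OF l0j l0v k] m_def c0_def by simp
        then have "r * ?ml l0 k \<le> ?ml j k" using c0 unfolding r_def by (simp add: field_simps)
        moreover have "0 \<le> r * ?ml l0 k" using r ml_nonneg[OF k] by simp
        ultimately show ?thesis by (rule power_mono)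
      qed
      have pwj: "(r * ?ml l0 j)\<^sup>2 < (?ml j j)\<^sup>2"
        using ml_zero[OF _ jl0] l0ne ml_diag[of j] diag_pos[OF jv] by auto
      have "(\<Sum>k\<in>verts d. (r * ?ml l0 k)\<^sup>2) < ?S j"
        by (rule sum_strict_mono_ex1) (use pw pwj jv in \<open>auto simp: verts_def\<close>)
      then have rS: "r\<^sup>2 * ?S l0 < ?S j" by (simp add: power_mult_distrib sum_distrib_left)
      have S0: "?S l0 > 0" by (rule S_pos[OF l0v])
      have Sj: "?S j > 0" by (rule S_pos[OF jv])
      define x where "x = (std_coef d E c l0 l0)\<^sup>2"
      define y where "y = (std_coef d E c j l0)\<^sup>2"
      have x: "x = c0\<^sup>2 / ?S l0" unfolding x_def std_coef_def ml_diag c0_def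
        using S0 by (simp add: power_divide)
      have y: "y = m\<^sup>2 / ?S j" unfolding y_def std_coef_def m_def
        using Sj by (simp add: power_divide)
      have mr: "m\<^sup>2 = r\<^sup>2 * c0\<^sup>2" unfolding r_def using c0 by (simp add: power_divide)
      have ypos: "y > 0" using y m Sj by simp
      have "m\<^sup>2 * ?S l0 < c0\<^sup>2 * ?S j"
        using rS c0 unfolding mr by (simp add: mult.assoc mult.left_commute[of "c0\<^sup>2"])
      then have xy: "x > y" unfolding x y using S0 Sj by (simp add: field_simps)
      have i: "l0 \<in> verts d - (Obs \<union> {j})" using l0U l0ne by auto
      have "(\<Sum>l\<in>?U - {j}.
          max ((std_coef d E c l0 l)\<^sup>2) (a\<^sup>2 * (std_coef d E c j l)\<^sup>2)
          - max ((std_coef d E c l0 l)\<^sup>2) ((std_coef d E c j l)\<^sup>2))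
          < (\<Sum>l\<in>?U - {j}. (a\<^sup>2 - 1) * (std_coef d E c j l)\<^sup>2)"
      proof (rule sum_strict_mono_ex1)
        show "finite (?U - {j})" by (simp add: verts_def)
        show "\<forall>l\<in>?U - {j}. max ((std_coef d E c l0 l)\<^sup>2) (a\<^sup>2 * (std_coef d E c j l)\<^sup>2)
          - max ((std_coef d E c l0 l)\<^sup>2) ((std_coef d E c j l)\<^sup>2)
          \<le> (a\<^sup>2 - 1) * (std_coef d E c j l)\<^sup>2" using pt by simp
        show "\<exists>l\<in>?U - {j}. max ((std_coef d E c l0 l)\<^sup>2) (a\<^sup>2 * (std_coef d E c j l)\<^sup>2)
          - max ((std_coef d E c l0 l)\<^sup>2) ((std_coef d E c j l)\<^sup>2)
          < (a\<^sup>2 - 1) * (std_coef d E c j l)\<^sup>2"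
          using pts[OF ypos xy] i unfolding x_def y_def by auto
      qed
      then show False using H i by (simp add: sum_distrib_left)
    qed
  qed
qed

end
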